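(* Let $Q$ be a finite loop with the antiautomorphic inverse property and let $S$ be a subloop of $Q$. Let \[ \mathcal{L}(Q,S)=\Big\{\bigcap_{x\in X} xS : \emptyset\neq X\subseteq Q\Big\},\qquad \mathcal{R}(Q,S)=\Big\{\bigcap_{x\in X} Sx : \emptyset\neq X\subseteq Q\Big\}, \] each partially ordered by inclusion (they are meet-semilattices with meet given by intersection, in which the cosets are the maximal elements). Then the mapping $xS\mapsto Sx^{-1}$ (from left cosets to right cosets of $S$) is well-defined, and it extends uniquely to an isomorphism of meet-semilattices $\mathcal{L}(Q,S)\to\mathcal{R}(Q,S)$.
   Context: A loop $Q$ has the antiautomorphic inverse property if for every $x\in Q$ there is $x^{-1}\in Q$ with $xx^{-1}=1=x^{-1}x$, and $(xy)^{-1}=y^{-1}x^{-1}$ for all $x,y\in Q$. For a subloop $S\le Q$ and $x\in Q$, $xS=\{xs:s\in S\}$ and $Sx=\{sx:s\in S\}$. An isomorphism of meet-semilattices is a bijection $g$ with $g(a\wedge b)=g(a)\wedge g(b)$. *)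

theory Defs
  imports Main
begin

definition loop :: "'a set \<Rightarrow> ('a \<Rightarrow> 'a \<Rightarrow> 'a) \<Rightarrow> 'a \<Rightarrow> bool" where
  "loop Q m e \<longleftrightarrow> e \<in> Q \<and> (\<forall>x\<in>Q. \<forall>y\<in>Q. m x y \<in> Q) \<and>
     (\<forall>x\<in>Q. m e x = x \<and> m x e = x) \<and>
     (\<forall>a\<in>Q. \<forall>b\<in>Q. \<exists>!x. x \<in> Q \<and> m a x = b) \<and>
     (\<forall>a\<in>Q. \<forall>b\<in>Q. \<exists>!y. y \<in> Q \<and> m y a = b)"

definition loop_inv :: "'a set \<Rightarrow> ('a \<Rightarrow> 'a \<Rightarrow> 'a) \<Rightarrow> 'a \<Rightarrow> 'a \<Rightarrow> 'a" where
  "loop_inv Q m e x = (THE y. y \<in> Q \<and> m x y = e \<and> m y x = e)"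

definition aaip :: "'a set \<Rightarrow> ('a \<Rightarrow> 'a \<Rightarrow> 'a) \<Rightarrow> 'a \<Rightarrow> bool" where
  "aaip Q m e \<longleftrightarrow> (\<forall>x\<in>Q. \<exists>y\<in>Q. m x y = e \<and> m y x = e) \<and>
     (\<forall>x\<in>Q. \<forall>y\<in>Q. loop_inv Q m e (m x y) = m (loop_inv Q m e y) (loop_inv Q m e x))"

definition subloop :: "'a set \<Rightarrow> 'a set \<Rightarrow> ('a \<Rightarrow> 'a \<Rightarrow> 'a) \<Rightarrow> 'a \<Rightarrow> bool" where
  "subloop S Q m e \<longleftrightarrow> S \<subseteq> Q \<and> e \<in> S \<and> (\<forall>x\<in>S. \<forall>y\<in>S. m x y \<in> S) \<and>
     (\<forall>a\<in>S. \<forall>b\<in>S. \<exists>x\<in>S. m a x = b) \<and> (\<forall>a\<in>S. \<forall>b\<in>S. \<exists>y\<in>S. m y a = b)"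

definition lcoset :: "('a \<Rightarrow> 'a \<Rightarrow> 'a) \<Rightarrow> 'a \<Rightarrow> 'a set \<Rightarrow> 'a set" where
  "lcoset m x S = (\<lambda>s. m x s) ` S"

definition rcoset :: "('a \<Rightarrow> 'a \<Rightarrow> 'a) \<Rightarrow> 'a set \<Rightarrow> 'a \<Rightarrow> 'a set" where
  "rcoset m S x = (\<lambda>s. m s x) ` S"

definition Lsets :: "'a set \<Rightarrow> ('a \<Rightarrow> 'a \<Rightarrow> 'a) \<Rightarrow> 'a set \<Rightarrow> 'a set set" where
  "Lsets Q m S = {(\<Inter>x\<in>X. lcoset m x S) | X. X \<noteq> {} \<and> X \<subseteq> Q}"

definition Rsets :: "'a set \<Rightarrow> ('a \<Rightarrow> 'a \<Rightarrow> 'a) \<Rightarrow> 'a set \<Rightarrow> 'a set set" where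
  "Rsets Q m S = {(\<Inter>x\<in>X. rcoset m S x) | X. X \<noteq> {} \<and> X \<subseteq> Q}"

definition meet_iso :: "('a set \<Rightarrow> 'a set) \<Rightarrow> 'a set set \<Rightarrow> 'a set set \<Rightarrow> bool" where
  "meet_iso g L R \<longleftrightarrow> bij_betw g L R \<and> (\<forall>A\<in>L. \<forall>B\<in>L. g (A \<inter> B) = g A \<inter> g B)"

end

theory Submission
  imports Defs
begin

lemma loopD:
  assumes "loop Q m e"
  shows "e \<in> Q" "\<And>x y. x \<in> Q \<Longrightarrow> y \<in> Q \<Longrightarrow> m x y \<in> Q"
    "\<And>a b. a \<in> Q \<Longrightarrow> b \<in> Q \<Longrightarrow> \<exists>!x. x \<in> Q \<and> m a x = b"
proof -
  have h: "e \<in> Q \<and> (\<forall>x\<in>Q. \<forall>y\<in>Q. m x y \<in> Q) \<and>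
     (\<forall>x\<in>Q. m e x = x \<and> m x e = x) \<and>
     (\<forall>a\<in>Q. \<forall>b\<in>Q. \<exists>!x. x \<in> Q \<and> m a x = b) \<and>
     (\<forall>a\<in>Q. \<forall>b\<in>Q. \<exists>!y. y \<in> Q \<and> m y a = b)" using assms unfolding loop_def .
  show "e \<in> Q" using h by (rule conjunct1)
  show "\<And>x y. x \<in> Q \<Longrightarrow> y \<in> Q \<Longrightarrow> m x y \<in> Q" using h by simp
  show "\<And>a b. a \<in> Q \<Longrightarrow> b \<in> Q \<Longrightarrow> \<exists>!x. x \<in> Q \<and> m a x = b"
  proof -
    fix a b assume "a \<in> Q" "b \<in> Q"
    moreover have "\<forall>a\<in>Q. \<forall>b\<in>Q. \<exists>!x. x \<in> Q \<and> m a x = b" using h by (elim conjE)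
    ultimately show "\<exists>!x. x \<in> Q \<and> m a x = b" by (elim ballE) auto
  qed
qed

lemma aaipD:
  assumes "aaip Q m e"
  shows "\<And>x. x \<in> Q \<Longrightarrow> \<exists>y\<in>Q. m x y = e \<and> m y x = e"
    "\<And>x y. x \<in> Q \<Longrightarrow> y \<in> Q \<Longrightarrow> loop_inv Q m e (m x y) = m (loop_inv Q m e y) (loop_inv Q m e x)"
  using assms unfolding aaip_def by (elim conjE; simp)+

lemma subloopD:
  assumes "subloop S Q m e"
  shows "S \<subseteq> Q" "\<And>a b. a \<in> S \<Longrightarrow> b \<in> S \<Longrightarrow> \<exists>x\<in>S. m a x = b"
  using assms unfolding subloop_def by (elim conjE; simp)+

lemma inv_props:
  assumes L: "loop Q m e" and A: "aaip Q m e" and x: "x \<in> Q"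
  shows "loop_inv Q m e x \<in> Q \<and> m x (loop_inv Q m e x) = e \<and> m (loop_inv Q m e x) x = e"
proof -
  from aaipD(1)[OF A x] obtain y where y: "y \<in> Q" "m x y = e" "m y x = e" by blast
  have eQ: "e \<in> Q" using loopD(1)[OF L] .
  have u: "\<exists>!z. z \<in> Q \<and> m x z = e" using loopD(3)[OF L x eQ] .
  have "(THE z. z \<in> Q \<and> m x z = e \<and> m z x = e) = y"
    apply (rule the_equality) using y u by auto
  thus ?thesis using y unfolding loop_inv_def by simp
qed

lemma inv_unique:
  assumes L: "loop Q m e" and A: "aaip Q m e" and x: "x \<in> Q" and y: "y \<in> Q" and "m x y = e"
  shows "loop_inv Q m e x = y"
proof -
  have eQ: "e \<in> Q" using loopD(1)[OF L] .
  have u: "\<exists>!z. z \<in> Q \<and> m x z = e" using loopD(3)[OF L x eQ] .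
  thus ?thesis using inv_props[OF L A x] assms(4,5) by blast
qed

lemma inv_inv:
  assumes L: "loop Q m e" and A: "aaip Q m e" and x: "x \<in> Q"
  shows "loop_inv Q m e (loop_inv Q m e x) = x"
  by (rule inv_unique[OF L A]) (use inv_props[OF L A x] x in auto)

lemma inv_S:
  assumes L: "loop Q m e" and A: "aaip Q m e" and S: "subloop S Q m e" and s: "s \<in> S"
  shows "loop_inv Q m e s \<in> S"
proof -
  have eS: "e \<in> S" using S unfolding subloop_def by simp
  from subloopD(2)[OF S s eS] obtain y where y: "y \<in> S" "m s y = e" by blast
  have "S \<subseteq> Q" using subloopD(1)[OF S] .
  hence "loop_inv Q m e s = y" by (intro inv_unique[OF L A]) (use y s in auto)
  thus ?thesis using y by simp
qed

lemma inj_inv: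
  assumes L: "loop Q m e" and A: "aaip Q m e"
  shows "inj_on (loop_inv Q m e) Q"
proof (rule inj_onI)
  fix a b assume a: "a \<in> Q" and b: "b \<in> Q" and eq: "loop_inv Q m e a = loop_inv Q m e b"
  have "a = loop_inv Q m e (loop_inv Q m e a)" using inv_inv[OF L A a] by simp
  also have "\<dots> = loop_inv Q m e (loop_inv Q m e b)" using eq by simp
  also have "\<dots> = b" using inv_inv[OF L A b] by simp
  finally show "a = b" .
qed

lemma lcoset_sub:
  assumes L: "loop Q m e" and S: "subloop S Q m e" and x: "x \<in> Q"
  shows "lcoset m x S \<subseteq> Q"
  using loopD(2)[OF L] subloopD(1)[OF S] x unfolding lcoset_def by blast

lemma image_lcoset:
  assumes L: "loop Q m e" and A: "aaip Q m e" and S: "subloop S Q m e" and x: "x \<in> Q"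
  shows "loop_inv Q m e ` lcoset m x S = rcoset m S (loop_inv Q m e x)"
proof -
  let ?i = "loop_inv Q m e"
  have SQ: "S \<subseteq> Q" using subloopD(1)[OF S] .
  have aa: "\<And>a b. a \<in> Q \<Longrightarrow> b \<in> Q \<Longrightarrow> ?i (m a b) = m (?i b) (?i a)"
    using aaipD(2)[OF A] .
  show ?thesis
  proof
    show "?i ` lcoset m x S \<subseteq> rcoset m S (?i x)"
    proof
      fix z assume "z \<in> ?i ` lcoset m x S"
      then obtain s where s: "s \<in> S" "z = ?i (m x s)" unfolding lcoset_def by blast
      have "z = m (?i s) (?i x)" using s aa[of x s] x SQ by blast
      thus "z \<in> rcoset m S (?i x)" unfolding rcoset_def using inv_S[OF L A S s(1)] by blast
    qed
  next
    show "rcoset m S (?i x) \<subseteq> ?i ` lcoset m x S"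
    proof
      fix z assume "z \<in> rcoset m S (?i x)"
      then obtain t where t: "t \<in> S" "z = m t (?i x)" unfolding rcoset_def by blast
      have "?i (m x (?i t)) = m (?i (?i t)) (?i x)"
        using aa[of x "?i t"] x t SQ inv_S[OF L A S t(1)] by blast
      also have "\<dots> = z" using t inv_inv[OF L A, of t] SQ by auto
      finally show "z \<in> ?i ` lcoset m x S" unfolding lcoset_def
        using inv_S[OF L A S t(1)] by (metis image_eqI)
    qed
  qed
qed

lemma image_INT_l:
  assumes L: "loop Q m e" and A: "aaip Q m e" and S: "subloop S Q m e"
    and X: "X \<noteq> {}" "X \<subseteq> Q"
  shows "loop_inv Q m e ` (\<Inter>x\<in>X. lcoset m x S) = (\<Inter>y\<in>loop_inv Q m e ` X. rcoset m S y)"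
proof -
  obtain j where j: "j \<in> X" using X by blast
  have "loop_inv Q m e ` (\<Inter>x\<in>X. lcoset m x S) = (\<Inter>x\<in>X. loop_inv Q m e ` lcoset m x S)"
    apply (rule image_INT[OF inj_inv[OF L A] _ j])
    using lcoset_sub[OF L S] X by blast
  also have "\<dots> = (\<Inter>x\<in>X. rcoset m S (loop_inv Q m e x))"
    apply (rule INF_cong[OF refl]) apply (rule image_lcoset[OF L A S]) using X by blast
  finally show ?thesis by simp
qed

lemma INT_sub:
  assumes L: "loop Q m e" and S: "subloop S Q m e" and X: "X \<noteq> {}" "X \<subseteq> Q"
  shows "(\<Inter>x\<in>X. lcoset m x S) \<subseteq> Q"
  using X lcoset_sub[OF L S] by blast

lemma Lsets_sub:
  assumes L: "loop Q m e" and S: "subloop S Q m e" and "A \<in> Lsets Q m S"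
  shows "A \<subseteq> Q"
proof -
  from assms(3) obtain X where X: "X \<noteq> {}" "X \<subseteq> Q" "A = (\<Inter>x\<in>X. lcoset m x S)"
    unfolding Lsets_def by blast
  thus ?thesis using INT_sub[OF L S X(1,2)] by simp
qed

theorem proposition3p3:
  fixes Q S :: "'a set" and m :: "'a \<Rightarrow> 'a \<Rightarrow> 'a" and e :: 'a
  assumes "loop Q m e" and "finite Q" and "aaip Q m e" and "subloop S Q m e"
  shows "(\<forall>x\<in>Q. \<forall>y\<in>Q. lcoset m x S = lcoset m y S \<longrightarrow>
            rcoset m S (loop_inv Q m e x) = rcoset m S (loop_inv Q m e y))
       \<and> (\<exists>g. meet_iso g (Lsets Q m S) (Rsets Q m S)
              \<and> (\<forall>x\<in>Q. g (lcoset m x S) = rcoset m S (loop_inv Q m e x))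
              \<and> (\<forall>g'. meet_iso g' (Lsets Q m S) (Rsets Q m S)
                      \<and> (\<forall>x\<in>Q. g' (lcoset m x S) = rcoset m S (loop_inv Q m e x))
                      \<longrightarrow> (\<forall>A\<in>Lsets Q m S. g' A = g A)))"
proof -
  note L = assms(1) and F = assms(2) and A = assms(3) and S = assms(4)
  let ?i = "loop_inv Q m e"
  let ?g = "\<lambda>A. ?i ` A"
  have part1: "\<forall>x\<in>Q. \<forall>y\<in>Q. lcoset m x S = lcoset m y S \<longrightarrow>
            rcoset m S (?i x) = rcoset m S (?i y)"
  proof (intro ballI impI)
    fix x y assume x: "x \<in> Q" and y: "y \<in> Q" and eq: "lcoset m x S = lcoset m y S"
    have "rcoset m S (?i x) = ?i ` lcoset m x S" using image_lcoset[OF L A S x] by simp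
    also have "\<dots> = ?i ` lcoset m y S" using eq by simp
    also have "\<dots> = rcoset m S (?i y)" using image_lcoset[OF L A S y] by simp
    finally show "rcoset m S (?i x) = rcoset m S (?i y)" .
  qed
  have inQ: "\<And>x. x \<in> Q \<Longrightarrow> ?i x \<in> Q" using inv_props[OF L A] by blast
  have gimg: "?g ` Lsets Q m S = Rsets Q m S"
  proof
    show "?g ` Lsets Q m S \<subseteq> Rsets Q m S"
    proof
      fix B assume "B \<in> ?g ` Lsets Q m S"
      then obtain X where X: "X \<noteq> {}" "X \<subseteq> Q" "B = ?g (\<Inter>x\<in>X. lcoset m x S)"
        unfolding Lsets_def by blast
      hence "B = (\<Inter>y\<in>?i ` X. rcoset m S y)" using image_INT_l[OF L A S] by simp
      moreover have "?i ` X \<noteq> {}" "?i ` X \<subseteq> Q" using X inQ by auto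
      ultimately show "B \<in> Rsets Q m S" unfolding Rsets_def by blast
    qed
  next
    show "Rsets Q m S \<subseteq> ?g ` Lsets Q m S"
    proof
      fix B assume "B \<in> Rsets Q m S"
      then obtain Y where Y: "Y \<noteq> {}" "Y \<subseteq> Q" "B = (\<Inter>y\<in>Y. rcoset m S y)"
        unfolding Rsets_def by blast
      have X: "?i ` Y \<noteq> {}" "?i ` Y \<subseteq> Q" using Y inQ by auto
      have "?i ` (?i ` Y) = Y" using Y(2) inv_inv[OF L A] by (force simp: image_image)
      hence "B = ?g (\<Inter>x\<in>?i ` Y. lcoset m x S)" using image_INT_l[OF L A S X] Y by simp
      moreover have "(\<Inter>x\<in>?i ` Y. lcoset m x S) \<in> Lsets Q m S" unfolding Lsets_def using X by blast
      ultimately show "B \<in> ?g ` Lsets Q m S" by blast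
    qed
  qed
  have ginj: "inj_on ?g (Lsets Q m S)"
  proof (rule inj_onI)
    fix A B assume "A \<in> Lsets Q m S" "B \<in> Lsets Q m S" and eq: "?i ` A = ?i ` B"
    hence "A \<subseteq> Q" "B \<subseteq> Q" using Lsets_sub[OF L S] by auto
    thus "A = B" using inj_on_image_eq_iff[OF inj_inv[OF L A]] eq by blast
  qed
  have gmeet: "\<forall>A\<in>Lsets Q m S. \<forall>B\<in>Lsets Q m S. ?g (A \<inter> B) = ?g A \<inter> ?g B"
    by (intro ballI inj_on_image_Int[OF inj_inv[OF L A]] Lsets_sub[OF L S])
  have iso: "meet_iso ?g (Lsets Q m S) (Rsets Q m S)"
    unfolding meet_iso_def bij_betw_def using gimg ginj gmeet by blast
  have gcos: "\<forall>x\<in>Q. ?g (lcoset m x S) = rcoset m S (?i x)" using image_lcoset[OF L A S] by blast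
  have uniq: "\<forall>g'. meet_iso g' (Lsets Q m S) (Rsets Q m S)
                      \<and> (\<forall>x\<in>Q. g' (lcoset m x S) = rcoset m S (?i x))
                      \<longrightarrow> (\<forall>A\<in>Lsets Q m S. g' A = ?g A)"
  proof (intro allI impI ballI)
    fix g' A assume H: "meet_iso g' (Lsets Q m S) (Rsets Q m S)
                      \<and> (\<forall>x\<in>Q. g' (lcoset m x S) = rcoset m S (?i x))"
      and AL: "A \<in> Lsets Q m S"
    from AL obtain X where X: "X \<noteq> {}" "X \<subseteq> Q" "A = (\<Inter>x\<in>X. lcoset m x S)"
      unfolding Lsets_def by blast
    have fX: "finite X" using X F finite_subset by blast
    have "X \<subseteq> Q \<longrightarrow> g' (\<Inter>x\<in>X. lcoset m x S) = ?g (\<Inter>x\<in>X. lcoset m x S)"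
      using fX X(1)
    proof (induction X rule: finite_ne_induct)
      case (singleton x) thus ?case using H gcos by auto
    next
      case (insert a X)
      show ?case
      proof
        assume aX: "insert a X \<subseteq> Q"
        have m1: "lcoset m a S \<in> Lsets Q m S" unfolding Lsets_def using aX
          by (intro CollectI exI[of _ "{a}"]) auto
        have m2: "(\<Inter>x\<in>X. lcoset m x S) \<in> Lsets Q m S" unfolding Lsets_def
          using aX insert.hyps by blast
        have "g' (\<Inter>x\<in>insert a X. lcoset m x S) = g' (lcoset m a S \<inter> (\<Inter>x\<in>X. lcoset m x S))" by simp
        also have "\<dots> = g' (lcoset m a S) \<inter> g' (\<Inter>x\<in>X. lcoset m x S)"
          using H m1 m2 unfolding meet_iso_def by blast
        also have "\<dots> = ?g (lcoset m a S) \<inter> ?g (\<Inter>x\<in>X. lcoset m x S)"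
          using insert.IH aX H gcos by auto
        also have "\<dots> = ?g (lcoset m a S \<inter> (\<Inter>x\<in>X. lcoset m x S))"
          using gmeet m1 m2 by metis
        finally show "g' (\<Inter>x\<in>insert a X. lcoset m x S) = ?g (\<Inter>x\<in>insert a X. lcoset m x S)" by simp
      qed
    qed
    thus "g' A = ?g A" using X by simp
  qed
  show ?thesis apply (rule conjI[OF part1]) apply (rule exI[of _ ?g])
    using iso gcos uniq by (intro conjI)
qed

end
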